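(* If $\Lambda$ is a finite index subgroup of a group $\Gamma$, then $\mathrm{Lit}(\Lambda)=\mathrm{Lit}(\Gamma)$.
   Context: $T_1(\Gamma)$ is the space of all $f\colon\Gamma\to\mathbf{C}$ for which there exist $f_1,f_2\colon\Gamma\times\Gamma\to\mathbf{C}$ with $f(x^{-1}y)=f_1(x,y)+f_2(x,y)$ for all $x,y$, $\sup_x\sum_y|f_1(x,y)|<\infty$, $\sup_y\sum_x|f_2(x,y)|<\infty$; $\mathrm{Lit}(\Gamma)=\inf\{p>0:T_1(\Gamma)\subseteq\ell^p(\Gamma)\}\in[0,\infty]$. *)

theory Defs
  imports "HOL-Analysis.Analysis" "HOL-Algebra.Coset"
begin

definition T1 :: "('a, 'b) monoid_scheme \<Rightarrow> ('a \<Rightarrow> complex) set" where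
  "T1 G = {f. \<exists>f1 f2 :: 'a \<Rightarrow> 'a \<Rightarrow> complex.
      (\<forall>x\<in>carrier G. \<forall>y\<in>carrier G. f (inv\<^bsub>G\<^esub> x \<otimes>\<^bsub>G\<^esub> y) = f1 x y + f2 x y) \<and>
      (SUP x\<in>carrier G. (\<Sum>\<^sub>\<infinity> y\<in>carrier G. ennreal (norm (f1 x y)))) < \<infinity> \<and>
      (SUP y\<in>carrier G. (\<Sum>\<^sub>\<infinity> x\<in>carrier G. ennreal (norm (f2 x y)))) < \<infinity>}"

definition lp :: "('a, 'b) monoid_scheme \<Rightarrow> real \<Rightarrow> ('a \<Rightarrow> complex) set" where
  "lp G p = {f. (\<Sum>\<^sub>\<infinity> x\<in>carrier G. ennreal (norm (f x) powr p)) < \<infinity>}"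

definition Lit :: "('a, 'b) monoid_scheme \<Rightarrow> ereal" where
  "Lit G = Inf {ereal p | p. p > 0 \<and> T1 G \<subseteq> lp G p}"

end

theory Submission
  imports Defs
begin

lemma T1_sub_iff:
  assumes "group G" "subgroup H G"
  shows "f \<in> T1 (G\<lparr>carrier := H\<rparr>) \<longleftrightarrow> (\<exists>f1 f2 :: 'a \<Rightarrow> 'a \<Rightarrow> complex.
      (\<forall>x\<in>H. \<forall>y\<in>H. f (inv\<^bsub>G\<^esub> x \<otimes>\<^bsub>G\<^esub> y) = f1 x y + f2 x y) \<and>
      (SUP x\<in>H. (\<Sum>\<^sub>\<infinity> y\<in>H. ennreal (norm (f1 x y)))) < \<infinity> \<and>
      (SUP y\<in>H. (\<Sum>\<^sub>\<infinity> x\<in>H. ennreal (norm (f2 x y)))) < \<infinity>)"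
proof -
  have "\<And>x. x \<in> H \<Longrightarrow> inv\<^bsub>G\<lparr>carrier := H\<rparr>\<^esub> x = inv\<^bsub>G\<^esub> x"
    using group.m_inv_consistent[OF assms(1) assms(2)] by blast
  then show ?thesis unfolding T1_def by (auto cong: ball_cong)
qed

lemma lp_sub_iff: "f \<in> lp (G\<lparr>carrier := H\<rparr>) p \<longleftrightarrow> (\<Sum>\<^sub>\<infinity> x\<in>H. ennreal (norm (f x) powr p)) < \<infinity>"
  unfolding lp_def by simp

lemma esum_le:
  fixes f g :: "'x \<Rightarrow> ennreal"
  assumes "A \<subseteq> B"
  shows "infsum f A \<le> infsum f B"
  by (rule infsum_mono_neutral) (use assms in \<open>auto intro: nonneg_summable_on_complete\<close>)


lemma (in group) dir1:
  assumes sg: "subgroup H G" and hyp: "T1 G \<subseteq> lp G p"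
    and f: "f \<in> T1 (G\<lparr>carrier := H\<rparr>)"
  shows "f \<in> lp (G\<lparr>carrier := H\<rparr>) p"
proof -
  have Hsub: "H \<subseteq> carrier G" by (rule subgroup.subset[OF sg])
  have Hinv: "\<And>x. x \<in> H \<Longrightarrow> inv x \<in> H" by (rule subgroup.m_inv_closed[OF sg])
  have Hmul: "\<And>x y. x \<in> H \<Longrightarrow> y \<in> H \<Longrightarrow> x \<otimes> y \<in> H" by (rule subgroup.m_closed[OF sg])
  have Hone: "\<one> \<in> H" by (rule subgroup.one_closed[OF sg])
  have "\<exists>f1 f2 :: 'a \<Rightarrow> 'a \<Rightarrow> complex.
      (\<forall>x\<in>H. \<forall>y\<in>H. f (inv x \<otimes> y) = f1 x y + f2 x y) \<and>
      (SUP x\<in>H. (\<Sum>\<^sub>\<infinity> y\<in>H. ennreal (norm (f1 x y)))) < \<infinity> \<and>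
      (SUP y\<in>H. (\<Sum>\<^sub>\<infinity> x\<in>H. ennreal (norm (f2 x y)))) < \<infinity>"
    by (rule T1_sub_iff[OF is_group sg, THEN iffD1, OF f])
  then obtain f1 f2 :: "'a \<Rightarrow> 'a \<Rightarrow> complex" where
    dec: "\<forall>x\<in>H. \<forall>y\<in>H. f (inv x \<otimes> y) = f1 x y + f2 x y" and
    b1: "(SUP x\<in>H. (\<Sum>\<^sub>\<infinity> y\<in>H. ennreal (norm (f1 x y)))) < \<infinity>" and
    b2: "(SUP y\<in>H. (\<Sum>\<^sub>\<infinity> x\<in>H. ennreal (norm (f2 x y)))) < \<infinity>"
    by blast
  define R where "R x y \<longleftrightarrow> inv x \<otimes> y \<in> H" for x y
  have Rrefl: "R x x" if "x \<in> carrier G" for x using that Hone by (simp add: R_def)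
  have Rsym: "R y x" if "x \<in> carrier G" "y \<in> carrier G" "R x y" for x y
  proof -
    have "inv (inv x \<otimes> y) \<in> H" using that Hinv by (simp add: R_def)
    then show ?thesis using that by (simp add: R_def inv_mult_group)
  qed
  have Rsym_iff: "R x y \<longleftrightarrow> R y x" if "x \<in> carrier G" "y \<in> carrier G" for x y
    using Rsym that by blast
  have Rtrans: "R x z" if "x \<in> carrier G" "y \<in> carrier G" "z \<in> carrier G" "R x y" "R y z" for x y z
  proof -
    have "(inv x \<otimes> y) \<otimes> (inv y \<otimes> z) \<in> H" using that Hmul by (simp add: R_def)
    also have "(inv x \<otimes> y) \<otimes> (inv y \<otimes> z) = inv x \<otimes> z"
      using that by (simp add: m_assoc[symmetric]) (simp add: m_assoc)
    finally show ?thesis by (simp add: R_def)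
  qed
  define c where "c x = (SOME z. z \<in> carrier G \<and> R x z)" for x
  have c1: "c x \<in> carrier G \<and> R x (c x)" if "x \<in> carrier G" for x
  proof -
    have "x \<in> carrier G \<and> R x x" using that Rrefl[OF that] by simp
    then show ?thesis unfolding c_def by (rule someI[where P="\<lambda>z. z \<in> carrier G \<and> R x z"])
  qed
  have c2: "c x = c y" if "x \<in> carrier G" "y \<in> carrier G" "R x y" for x y
  proof -
    have eq: "(z \<in> carrier G \<and> R x z) = (z \<in> carrier G \<and> R y z)" for z
    proof (intro iffI conjI)
      assume "z \<in> carrier G \<and> R x z"
      then show "z \<in> carrier G" "R y z" using Rtrans[OF that(2) that(1) _ Rsym[OF that]] by auto
    next
      assume "z \<in> carrier G \<and> R y z"
      then show "z \<in> carrier G" "R x z" using Rtrans[OF that(1) that(2) _ that(3)] by auto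
    qed
    show ?thesis unfolding c_def eq by (rule refl)
  qed
  define hx where "hx x = inv (c x) \<otimes> x" for x
  have hxH: "hx x \<in> H" if "x \<in> carrier G" for x
    using Rsym[of x "c x"] c1[OF that] that by (simp add: hx_def R_def)
  have hxprod: "inv (hx x) \<otimes> hx y = inv x \<otimes> y" if "x \<in> carrier G" "y \<in> carrier G" "R x y" for x y
  proof -
    have cx: "c x \<in> carrier G" using c1 that by blast
    have "inv (hx x) \<otimes> hx y = (inv x \<otimes> c x) \<otimes> (inv (c x) \<otimes> y)"
      using c2[OF that] cx that by (simp add: hx_def inv_mult_group)
    also have "\<dots> = inv x \<otimes> y" using cx that by (simp add: m_assoc[symmetric]) (simp add: m_assoc)
    finally show ?thesis .
  qed
  have bij: "bij_betw (\<lambda>y. inv (c x) \<otimes> y) {y \<in> carrier G. R x y} H" if x: "x \<in> carrier G" for x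
  proof (rule bij_betw_byWitness[where f'="\<lambda>h. c x \<otimes> h"])
    have cx: "c x \<in> carrier G" "R x (c x)" using c1 x by auto
    show "\<forall>a\<in>{y \<in> carrier G. R x y}. c x \<otimes> (inv (c x) \<otimes> a) = a"
      using cx by (simp add: m_assoc[symmetric])
    show "\<forall>a'\<in>H. inv (c x) \<otimes> (c x \<otimes> a') = a'"
      using cx Hsub by (auto simp add: m_assoc[symmetric])
    show "(\<lambda>y. inv (c x) \<otimes> y) ` {y \<in> carrier G. R x y} \<subseteq> H"
    proof
      fix h assume "h \<in> (\<lambda>y. inv (c x) \<otimes> y) ` {y \<in> carrier G. R x y}"
      then obtain y where y: "y \<in> carrier G" "R x y" "h = inv (c x) \<otimes> y" by auto
      have "R (c x) y" using Rtrans[OF cx(1) x y(1) Rsym[OF x cx(1) cx(2)] y(2)] .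
      then show "h \<in> H" using y by (simp add: R_def)
    qed
    show "(\<lambda>h. c x \<otimes> h) ` H \<subseteq> {y \<in> carrier G. R x y}"
    proof
      fix y assume "y \<in> (\<lambda>h. c x \<otimes> h) ` H"
      then obtain h where h: "h \<in> H" "y = c x \<otimes> h" by auto
      have yG: "y \<in> carrier G" using h cx Hsub by auto
      have "inv (c x) \<otimes> y = h" using h cx subsetD[OF Hsub h(1)] by (simp add: m_assoc[symmetric])
      then have "R (c x) y" using h by (simp add: R_def)
      then have "R x y" using Rtrans[OF x cx(1) yG cx(2)] by blast
      then show "y \<in> {y \<in> carrier G. R x y}" using yG by blast
    qed
  qed
  have hx_eq: "hx y = inv (c x) \<otimes> y" if "x \<in> carrier G" "y \<in> carrier G" "R x y" for x y
    using c2[OF that] by (simp add: hx_def)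
  define g where "g z = (if z \<in> H then f z else 0)" for z
  define g1 where "g1 x y = (if R x y then f1 (hx x) (hx y) else 0)" for x y
  define g2 where "g2 x y = (if R x y then f2 (hx x) (hx y) else 0)" for x y
  have S1: "(\<Sum>\<^sub>\<infinity> y\<in>carrier G. ennreal (norm (g1 x y))) = (\<Sum>\<^sub>\<infinity> h\<in>H. ennreal (norm (f1 (hx x) h)))"
    if x: "x \<in> carrier G" for x
  proof -
    have "(\<Sum>\<^sub>\<infinity> y\<in>carrier G. ennreal (norm (g1 x y))) =
          (\<Sum>\<^sub>\<infinity> y\<in>{y \<in> carrier G. R x y}. ennreal (norm (f1 (hx x) (inv (c x) \<otimes> y))))"
      by (rule infsum_cong_neutral) (auto simp: g1_def hx_eq[OF x])
    also have "\<dots> = (\<Sum>\<^sub>\<infinity> h\<in>H. ennreal (norm (f1 (hx x) h)))"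
      by (rule infsum_reindex_bij_betw[OF bij[OF x]])
    finally show ?thesis .
  qed
  have S2: "(\<Sum>\<^sub>\<infinity> x\<in>carrier G. ennreal (norm (g2 x y))) = (\<Sum>\<^sub>\<infinity> h\<in>H. ennreal (norm (f2 h (hx y))))"
    if y: "y \<in> carrier G" for y
  proof -
    have "(\<Sum>\<^sub>\<infinity> x\<in>carrier G. ennreal (norm (g2 x y))) =
          (\<Sum>\<^sub>\<infinity> x\<in>{x \<in> carrier G. R y x}. ennreal (norm (f2 (inv (c y) \<otimes> x) (hx y))))"
      by (rule infsum_cong_neutral) (use y Rsym_iff in \<open>auto simp: g2_def hx_eq[OF y]\<close>)
    also have "\<dots> = (\<Sum>\<^sub>\<infinity> h\<in>H. ennreal (norm (f2 h (hx y))))"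
      by (rule infsum_reindex_bij_betw[OF bij[OF y]])
    finally show ?thesis .
  qed
  have gT: "g \<in> T1 G"
    unfolding T1_def
  proof (intro CollectI exI conjI)
    show "\<forall>x\<in>carrier G. \<forall>y\<in>carrier G. g (inv x \<otimes> y) = g1 x y + g2 x y"
    proof (intro ballI)
      fix x y assume xy: "x \<in> carrier G" "y \<in> carrier G"
      show "g (inv x \<otimes> y) = g1 x y + g2 x y"
      proof (cases "R x y")
        case True
        then have "g (inv x \<otimes> y) = f (inv (hx x) \<otimes> hx y)"
          using hxprod[OF xy True] by (simp add: g_def R_def)
        also have "\<dots> = f1 (hx x) (hx y) + f2 (hx x) (hx y)" using dec hxH xy by blast
        finally show ?thesis using True by (simp add: g1_def g2_def)
      next
        case False
        then show ?thesis by (simp add: g_def g1_def g2_def R_def)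
      qed
    qed
    show "(SUP x\<in>carrier G. \<Sum>\<^sub>\<infinity> y\<in>carrier G. ennreal (norm (g1 x y))) < \<infinity>"
    proof (rule le_less_trans[OF _ b1], rule SUP_least)
      fix x assume x: "x \<in> carrier G"
      show "(\<Sum>\<^sub>\<infinity> y\<in>carrier G. ennreal (norm (g1 x y))) \<le> (SUP x\<in>H. \<Sum>\<^sub>\<infinity> y\<in>H. ennreal (norm (f1 x y)))"
        unfolding S1[OF x] by (rule SUP_upper) (rule hxH[OF x])
    qed
    show "(SUP y\<in>carrier G. \<Sum>\<^sub>\<infinity> x\<in>carrier G. ennreal (norm (g2 x y))) < \<infinity>"
    proof (rule le_less_trans[OF _ b2], rule SUP_least)
      fix y assume y: "y \<in> carrier G"
      show "(\<Sum>\<^sub>\<infinity> x\<in>carrier G. ennreal (norm (g2 x y))) \<le> (SUP y\<in>H. \<Sum>\<^sub>\<infinity> x\<in>H. ennreal (norm (f2 x y)))"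
        unfolding S2[OF y] by (rule SUP_upper) (rule hxH[OF y])
    qed
  qed
  then have "g \<in> lp G p" using hyp by blast
  then have "(\<Sum>\<^sub>\<infinity> x\<in>carrier G. ennreal (norm (g x) powr p)) < \<infinity>" by (simp add: lp_def)
  moreover have "(\<Sum>\<^sub>\<infinity> x\<in>carrier G. ennreal (norm (g x) powr p)) = (\<Sum>\<^sub>\<infinity> x\<in>H. ennreal (norm (f x) powr p))"
    by (rule infsum_cong_neutral) (use Hsub in \<open>auto simp: g_def\<close>)
  ultimately show ?thesis by (simp add: lp_sub_iff)
qed


lemma (in group) dir2:
  assumes sg: "subgroup H G" and fin: "finite (rcosets H)"
    and hyp: "T1 (G\<lparr>carrier := H\<rparr>) \<subseteq> lp (G\<lparr>carrier := H\<rparr>) p"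
    and f: "f \<in> T1 G"
  shows "f \<in> lp G p"
proof -
  have Hsub: "H \<subseteq> carrier G" by (rule subgroup.subset[OF sg])
  have "\<exists>f1 f2 :: 'a \<Rightarrow> 'a \<Rightarrow> complex.
      (\<forall>x\<in>carrier G. \<forall>y\<in>carrier G. f (inv x \<otimes> y) = f1 x y + f2 x y) \<and>
      (SUP x\<in>carrier G. (\<Sum>\<^sub>\<infinity> y\<in>carrier G. ennreal (norm (f1 x y)))) < \<infinity> \<and>
      (SUP y\<in>carrier G. (\<Sum>\<^sub>\<infinity> x\<in>carrier G. ennreal (norm (f2 x y)))) < \<infinity>"
    using f unfolding T1_def mem_Collect_eq .
  then obtain f1 f2 :: "'a \<Rightarrow> 'a \<Rightarrow> complex" where
    dec: "\<forall>x\<in>carrier G. \<forall>y\<in>carrier G. f (inv x \<otimes> y) = f1 x y + f2 x y" and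
    b1: "(SUP x\<in>carrier G. (\<Sum>\<^sub>\<infinity> y\<in>carrier G. ennreal (norm (f1 x y)))) < \<infinity>" and
    b2: "(SUP y\<in>carrier G. (\<Sum>\<^sub>\<infinity> x\<in>carrier G. ennreal (norm (f2 x y)))) < \<infinity>"
    by blast
  have coset: "(\<Sum>\<^sub>\<infinity> x\<in>H #> t. ennreal (norm (f x) powr p)) < \<infinity>" if t: "t \<in> carrier G" for t
  proof -
    have inj: "inj_on (\<lambda>h. h \<otimes> t) H"
    proof (rule inj_onI)
      fix a b assume "a \<in> H" "b \<in> H" "a \<otimes> t = b \<otimes> t"
      then show "a = b" using t subsetD[OF Hsub] by simp
    qed
    have img: "(\<lambda>h. h \<otimes> t) ` H \<subseteq> carrier G" using t Hsub by auto
    define ft where "ft h = f (h \<otimes> t)" for h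
    have "ft \<in> T1 (G\<lparr>carrier := H\<rparr>)"
      unfolding T1_sub_iff[OF is_group sg]
    proof (intro exI conjI)
      show "\<forall>x\<in>H. \<forall>y\<in>H. ft (inv x \<otimes> y) = f1 x (y \<otimes> t) + f2 x (y \<otimes> t)"
      proof (intro ballI)
        fix x y assume xy: "x \<in> H" "y \<in> H"
        have xG: "x \<in> carrier G" and yG: "y \<in> carrier G" using xy Hsub by auto
        have "ft (inv x \<otimes> y) = f (inv x \<otimes> (y \<otimes> t))"
          using xG yG t by (simp add: ft_def m_assoc)
        also have "\<dots> = f1 x (y \<otimes> t) + f2 x (y \<otimes> t)" using dec xG yG t by simp
        finally show "ft (inv x \<otimes> y) = f1 x (y \<otimes> t) + f2 x (y \<otimes> t)" .
      qed
      show "(SUP x\<in>H. \<Sum>\<^sub>\<infinity> y\<in>H. ennreal (norm (f1 x (y \<otimes> t)))) < \<infinity>"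
      proof (rule le_less_trans[OF _ b1], rule SUP_least)
        fix a assume a: "a \<in> H"
        have "(\<Sum>\<^sub>\<infinity> y\<in>H. ennreal (norm (f1 a (y \<otimes> t)))) =
              (\<Sum>\<^sub>\<infinity> z\<in>(\<lambda>h. h \<otimes> t) ` H. ennreal (norm (f1 a z)))"
          using infsum_reindex[OF inj, of "\<lambda>z. ennreal (norm (f1 a z))"] by (simp add: o_def)
        also have "\<dots> \<le> (\<Sum>\<^sub>\<infinity> z\<in>carrier G. ennreal (norm (f1 a z)))" by (rule esum_le[OF img])
        also have "\<dots> \<le> (SUP x\<in>carrier G. \<Sum>\<^sub>\<infinity> y\<in>carrier G. ennreal (norm (f1 x y)))"
          by (rule SUP_upper) (use a Hsub in auto)
        finally show "(\<Sum>\<^sub>\<infinity> y\<in>H. ennreal (norm (f1 a (y \<otimes> t)))) \<le> (SUP x\<in>carrier G. \<Sum>\<^sub>\<infinity> y\<in>carrier G. ennreal (norm (f1 x y)))" .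
      qed
      show "(SUP y\<in>H. \<Sum>\<^sub>\<infinity> x\<in>H. ennreal (norm (f2 x (y \<otimes> t)))) < \<infinity>"
      proof (rule le_less_trans[OF _ b2], rule SUP_least)
        fix b assume b: "b \<in> H"
        have "(\<Sum>\<^sub>\<infinity> x\<in>H. ennreal (norm (f2 x (b \<otimes> t)))) \<le> (\<Sum>\<^sub>\<infinity> x\<in>carrier G. ennreal (norm (f2 x (b \<otimes> t))))"
          by (rule esum_le[OF Hsub])
        also have "\<dots> \<le> (SUP y\<in>carrier G. \<Sum>\<^sub>\<infinity> x\<in>carrier G. ennreal (norm (f2 x y)))"
          by (rule SUP_upper) (use b Hsub t in auto)
        finally show "(\<Sum>\<^sub>\<infinity> x\<in>H. ennreal (norm (f2 x (b \<otimes> t)))) \<le> (SUP y\<in>carrier G. \<Sum>\<^sub>\<infinity> x\<in>carrier G. ennreal (norm (f2 x y)))" .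
      qed
    qed
    then have "ft \<in> lp (G\<lparr>carrier := H\<rparr>) p" using hyp by blast
    then have "(\<Sum>\<^sub>\<infinity> h\<in>H. ennreal (norm (f (h \<otimes> t)) powr p)) < \<infinity>"
      by (simp add: lp_sub_iff ft_def)
    moreover have "H #> t = (\<lambda>h. h \<otimes> t) ` H" unfolding r_coset_def by auto
    moreover have "(\<Sum>\<^sub>\<infinity> x\<in>(\<lambda>h. h \<otimes> t) ` H. ennreal (norm (f x) powr p)) = (\<Sum>\<^sub>\<infinity> h\<in>H. ennreal (norm (f (h \<otimes> t)) powr p))"
      using infsum_reindex[OF inj, of "\<lambda>x. ennreal (norm (f x) powr p)"] by (simp add: o_def)
    ultimately show ?thesis by simp
  qed
  have "(\<Sum>\<^sub>\<infinity> x\<in>carrier G. ennreal (norm (f x) powr p)) = (\<Sum>\<^sub>\<infinity> x\<in>(\<Union>M\<in>rcosets H. M). ennreal (norm (f x) powr p))"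
    using rcosets_part_G[OF sg] by simp
  also have "\<dots> = (\<Sum>M\<in>rcosets H. \<Sum>\<^sub>\<infinity> x\<in>M. ennreal (norm (f x) powr p))"
  proof (rule sum_infsum[symmetric, OF fin])
    show "\<And>M. M \<in> rcosets H \<Longrightarrow> (\<lambda>x. ennreal (norm (f x) powr p)) summable_on M"
      by (rule nonneg_summable_on_complete) simp
    show "\<And>M M'. M \<in> rcosets H \<Longrightarrow> M' \<in> rcosets H \<Longrightarrow> M \<noteq> M' \<Longrightarrow> M \<inter> M' = {}"
      using rcos_disjoint[OF sg] unfolding disjoint_def by blast
  qed
  also have "\<dots> < \<infinity>"
  proof -
    have "(\<Sum>\<^sub>\<infinity> x\<in>M. ennreal (norm (f x) powr p)) < \<infinity>" if "M \<in> rcosets H" for M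
      using that coset unfolding RCOSETS_def by auto
    then show ?thesis using fin by (simp add: ennreal_sum_less_top)
  qed
  finally show ?thesis by (simp add: lp_def)
qed


theorem proposition3p6:
  fixes G :: "('a, 'b) monoid_scheme" and H :: "'a set"
  assumes "group G" and "subgroup H G" and "finite (rcosets\<^bsub>G\<^esub> H)"
  shows "Lit (G\<lparr>carrier := H\<rparr>) = Lit G"
proof -
  have eq: "(T1 (G\<lparr>carrier := H\<rparr>) \<subseteq> lp (G\<lparr>carrier := H\<rparr>) p) = (T1 G \<subseteq> lp G p)" for p
  proof
    assume "T1 (G\<lparr>carrier := H\<rparr>) \<subseteq> lp (G\<lparr>carrier := H\<rparr>) p"
    then show "T1 G \<subseteq> lp G p" using group.dir2[OF assms(1) assms(2) assms(3)] by blast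
  next
    assume "T1 G \<subseteq> lp G p"
    then show "T1 (G\<lparr>carrier := H\<rparr>) \<subseteq> lp (G\<lparr>carrier := H\<rparr>) p"
      using group.dir1[OF assms(1) assms(2)] by blast
  qed
  show ?thesis unfolding Lit_def eq ..
qed

end
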